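(* Let $n,r,m,d,p$ be positive integers and $T>0$. Let $\mathbf{J}\in\mathbb{R}^{n\times n}$ be skew-symmetric, $\mathbf{R}\in\mathbb{R}^{n\times n}$ symmetric positive semi-definite, $\mathbf{B}\in\mathbb{R}^{n\times m}$, $\mathbf{u}:[0,T]\to\mathbb{R}^m$ an input, and let the Hamiltonian be $H(\mathbf{x})=\tfrac12\mathbf{x}^\intercal\mathbf{Q}\mathbf{x}+\mathbf{c}^\intercal\mathbf{h}(\mathbf{x})$ with $\mathbf{Q}\in\mathbb{R}^{n\times n}$, $\mathbf{c}\in\mathbb{R}^d$ and a continuously differentiable $\mathbf{h}:\mathbb{R}^n\to\mathbb{R}^d$ with Jacobian $J_h(\mathbf{x})\in\mathbb{R}^{d\times n}$. Let $\mathbf{x}:[0,T]\to\mathbb{R}^n$ be the state of the full-order port-Hamiltonian system $$\dot{\mathbf{x}}(t)=(\mathbf{J}-\mathbf{R})\nabla_{\mathbf{x}}H(\mathbf{x}(t))+\mathbf{B}\mathbf{u}(t),\qquad \mathbf{y}(t)=\mathbf{B}^\intercal\nabla_{\mathbf{x}}H(\mathbf{x}(t)),\qquad \mathbf{x}(0)=\mathbf{x}^0 .$$ Let $\boldsymbol{\Phi}\in\mathbb{R}^{n\times r}$ have orthonormal columns, let $\mathbf{D}_r=\mathbf{J}_r-\mathbf{R}_r$ with $\mathbf{J}_r,\mathbf{R}_r\in\mathbb{R}^{r\times r}$, $\mathbf{B}_r\in\mathbb{R}^{r\times m}$, let $\boldsymbol{\Psi}\in\mathbb{R}^{d\times p}$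 have orthonormal columns, $\mathbf{P}=[\mathbf{e}_{\wp_1},\dots,\mathbf{e}_{\wp_p}]\in\mathbb{R}^{d\times p}$ with distinct indices $\wp_i\in\{1,\dots,d\}$ such that $\mathbf{P}^\intercal\boldsymbol{\Psi}$ is invertible, and $\mathbb{P}=\boldsymbol{\Psi}(\mathbf{P}^\intercal\boldsymbol{\Psi})^{-1}\mathbf{P}^\intercal$. Let $\mathbf{x}_r:[0,T]\to\mathbb{R}^r$ be the state of the reduced model $$\dot{\mathbf{x}}_r(t)=\mathbf{D}_r\nabla_{\mathbf{x}_r}H_{h_r}(\mathbf{x}_r(t))+\mathbf{B}_r\mathbf{u}(t),\qquad \mathbf{y}_r(t)=\mathbf{B}_r^\intercal\nabla_{\mathbf{x}_r}H_{h_r}(\mathbf{x}_r(t)),\qquad \mathbf{x}_r(0)=\boldsymbol{\Phi}^\intercal\mathbf{x}^0,$$ where $\nabla_{\mathbf{x}_r}H_{h_r}(\mathbf{x}_r)=\boldsymbol{\Phi}^\intercal\mathbf{Q}\boldsymbol{\Phi}\mathbf{x}_r+\boldsymbol{\Phi}^\intercal J_h^\intercal(\boldsymbol{\Phi}\mathbf{x}_r)\mathbb{P}^\intercal\mathbf{c}$. Let $\mathcal{D}_t[\mathbf{x}]:[0,T]\to\mathbb{R}^n$ be a given approximation of the time derivative $\dot{\mathbf{x}}$ (e.g. a finite-difference approximation). Suppose $\nabla_{\mathbf{x}}H$ and $J_h$ are both Lipschitz continuous. Then $$\int_0^T\|\mathbf{x}-\boldsymbol{\Phi}\mathbf{x}_r\|^2\,dt\le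 C(T)\Big(\int_0^T\|\mathbf{x}-\boldsymbol{\Phi}\boldsymbol{\Phi}^\intercal\mathbf{x}\|^2dt+\int_0^T\|\dot{\mathbf{x}}-\mathcal{D}_t[\mathbf{x}]\|^2dt+\int_0^T\|\boldsymbol{\Phi}^\intercal\mathcal{D}_t[\mathbf{x}]-\mathbf{D}_r\boldsymbol{\Phi}^\intercal\nabla_{\mathbf{x}}H(\mathbf{x})-\mathbf{B}_r\mathbf{u}(t)\|^2dt+\int_0^T\|(\mathbf{I}-\mathbb{P})J_h(\boldsymbol{\Phi}\boldsymbol{\Phi}^\intercal\mathbf{x})\boldsymbol{\Phi}\|^2dt\Big),$$ where $C(T)=\max\{1+C_2^2T\alpha(T),\,C_3^2T\alpha(T),\,T\alpha(T)\}$, with $C_1=\mu(\boldsymbol{\Phi}\mathbf{D}_r\boldsymbol{\Phi}^\intercal\mathbf{Q})+\|\mathbf{D}_r\boldsymbol{\Phi}^\intercal\|\,\mathcal{C}_{\mathrm{Lip}}[J_h]\,\|(\mathbf{P}^\intercal\boldsymbol{\Psi})^{-1}\|\,\|\mathbf{c}\|$, $C_2=\|\mathbf{D}_r\boldsymbol{\Phi}^\intercal\|\,\mathcal{C}_{\mathrm{Lip}}[\nabla_{\mathbf{x}}H]$, $C_3=\|\mathbf{D}_r\|\,\|\mathbf{c}\|$, and $\alpha(T)=4\int_0^Te^{2C_1(T-\tau)}\,d\tau$.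
   Context: $\|\cdot\|$ denotes the Euclidean norm on vectors and the induced (spectral) norm on matrices; $\langle\cdot,\cdot\rangle$ is the Euclidean inner product. For a map $f$ between normed spaces, $\mathcal{C}_{\mathrm{Lip}}[f]=\sup_{\mathbf{u}\ne\mathbf{v}}\|f(\mathbf{u})-f(\mathbf{v})\|/\|\mathbf{u}-\mathbf{v}\|$ is its Lipschitz constant. The logarithmic norm of a square matrix $\mathbf{A}$ is $\mu(\mathbf{A})=\sup_{\mathbf{x}\ne0}\Re\langle\mathbf{x},\mathbf{A}\mathbf{x}\rangle/\langle\mathbf{x},\mathbf{x}\rangle$. $\mathbf{e}_i$ denotes the $i$th unit vector of $\mathbb{R}^d$. *)

theory Defs
  imports "HOL-Analysis.Analysis"
begin

definition opnorm :: "real^'n^'m \<Rightarrow> real" where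
  "opnorm A = onorm (\<lambda>x. A *v x)"

definition lipconst :: "('a::real_normed_vector \<Rightarrow> 'b::real_normed_vector) \<Rightarrow> real" where
  "lipconst f = Sup {norm (f u - f v) / norm (u - v) | u v. u \<noteq> v}"

definition lipconst_op :: "('a::real_normed_vector \<Rightarrow> real^'n^'m) \<Rightarrow> real" where
  "lipconst_op F = Sup {opnorm (F u - F v) / norm (u - v) | u v. u \<noteq> v}"

definition lognorm :: "real^'n^'n \<Rightarrow> real" where
  "lognorm A = Sup {(x \<bullet> (A *v x)) / (x \<bullet> x) | x. x \<noteq> 0}"

definition selmat :: "('p \<Rightarrow> 'd) \<Rightarrow> real^'p^'d" where
  "selmat wp = (\<chi> i j. if i = wp j then 1 else 0)"

definition deim_proj :: "real^'p^'d \<Rightarrow> ('p \<Rightarrow> 'd) \<Rightarrow> real^'d^'d" where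
  "deim_proj Psi wp = Psi ** matrix_inv (transpose (selmat wp) ** Psi) ** transpose (selmat wp)"

text \<open>Gradient of H(x) = 1/2 x^T Q x + c^T h(x) (Q symmetric): Q x + J_h(x)^T c.\<close>
definition gradH :: "real^'n^'n \<Rightarrow> real^'d \<Rightarrow> (real^'n \<Rightarrow> real^'n^'d) \<Rightarrow> real^'n \<Rightarrow> real^'n" where
  "gradH Q c Jh x = Q *v x + transpose (Jh x) *v c"

definition gradHr :: "real^'n^'n \<Rightarrow> real^'d \<Rightarrow> (real^'n \<Rightarrow> real^'n^'d) \<Rightarrow> real^'r^'n
    \<Rightarrow> real^'d^'d \<Rightarrow> real^'r \<Rightarrow> real^'r" where
  "gradHr Q c Jh Phi PP xr =
     transpose Phi *v (Q *v (Phi *v xr))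
   + transpose Phi *v (transpose (Jh (Phi *v xr)) *v (transpose PP *v c))"

end

theory Submission
  imports Defs
begin

lemma inner_transpose:
  fixes A :: "real^'n^'m"
  shows "(A *v x) \<bullet> y = x \<bullet> (transpose A *v y)"
  unfolding inner_vec_def matrix_vector_mult_def transpose_def
  by (simp add: sum_distrib_left sum_distrib_right mult_ac) (rule sum.swap)

lemma orth_norm:
  fixes A :: "real^'r^'n"
  assumes "transpose A ** A = mat 1"
  shows "norm (A *v y) = norm y"
proof -
  have "(A *v y) \<bullet> (A *v y) = y \<bullet> y"
    by (simp add: inner_transpose matrix_vector_mul_assoc assms)
  then show ?thesis by (simp add: norm_eq_sqrt_inner)
qed

lemma orth_inner:
  fixes A :: "real^'r^'n"
  assumes "transpose A ** A = mat 1"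
  shows "(A *v y) \<bullet> (A *v w) = y \<bullet> w"
  by (simp add: inner_transpose matrix_vector_mul_assoc assms)

lemma orth_normT:
  fixes A :: "real^'r^'n"
  assumes "transpose A ** A = mat 1"
  shows "norm (transpose A *v x) \<le> norm x"
proof -
  define y where "y = transpose A *v x"
  have "norm y ^ 2 = y \<bullet> y" by (simp add: power2_norm_eq_inner)
  also have "\<dots> = (A *v y) \<bullet> x" by (simp add: inner_transpose y_def)
  also have "\<dots> \<le> norm (A *v y) * norm x" by (rule norm_cauchy_schwarz)
  also have "\<dots> = norm y * norm x" using orth_norm[OF assms] by simp
  finally have "norm y * norm y \<le> norm y * norm x" by (simp add: power2_eq_square)
  then show ?thesis unfolding y_def[symmetric]
    by (cases "norm y = 0") (auto simp: mult_le_cancel_left)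
qed

lemma opnorm_bound:
  fixes A :: "real^'n^'m"
  shows "norm (A *v x) \<le> opnorm A * norm x"
  unfolding opnorm_def by (rule onorm[OF matrix_vector_mul_bounded_linear])

lemma opnorm_nonneg:
  fixes A :: "real^'n^'m"
  shows "0 \<le> opnorm A"
  unfolding opnorm_def by (rule onorm_pos_le[OF matrix_vector_mul_bounded_linear])

lemma opnorm_le:
  fixes A :: "real^'n^'m"
  assumes "\<And>x. norm (A *v x) \<le> b * norm x"
  shows "opnorm A \<le> b"
  unfolding opnorm_def by (rule onorm_le) (rule assms)

lemma opnorm_frob:
  fixes A :: "real^'n^'m"
  shows "opnorm A \<le> real CARD('m) * norm A"
proof (rule opnorm_le)
  fix x :: "real^'n"
  have "norm (A *v x) \<le> (\<Sum>i\<in>UNIV. \<bar>(A *v x) $ i\<bar>)" by (rule norm_le_l1_cart)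
  also have "\<dots> \<le> (\<Sum>i\<in>(UNIV::'m set). norm A * norm x)"
  proof (rule sum_mono)
    fix i
    have "(A *v x) $ i = A $ i \<bullet> x"
      by (simp add: matrix_vector_mult_def inner_vec_def)
    then have "\<bar>(A *v x) $ i\<bar> \<le> norm (A $ i) * norm x"
      using Cauchy_Schwarz_ineq2 by simp
    also have "\<dots> \<le> norm A * norm x"
      using Finite_Cartesian_Product.norm_nth_le[of A i] by (simp add: mult_right_mono)
    finally show "\<bar>(A *v x) $ i\<bar> \<le> norm A * norm x" .
  qed
  finally show "norm (A *v x) \<le> real CARD('m) * norm A * norm x" by simp
qed

lemma opnorm_transpose:
  fixes A :: "real^'n^'m"
  shows "opnorm (transpose A) \<le> opnorm A"
proof (rule opnorm_le)
  fix z :: "real^'m"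
  define y where "y = transpose A *v z"
  have "norm y ^ 2 = y \<bullet> y" by (simp add: power2_norm_eq_inner)
  also have "\<dots> = z \<bullet> (A *v y)" by (metis inner_transpose transpose_transpose y_def inner_commute)
  also have "\<dots> \<le> norm z * norm (A *v y)" by (rule norm_cauchy_schwarz)
  also have "\<dots> \<le> norm z * (opnorm A * norm y)" by (intro mult_left_mono opnorm_bound) auto
  finally have "norm y * norm y \<le> norm y * (opnorm A * norm z)" by (simp add: power2_eq_square mult_ac)
  then show "norm y \<le> opnorm A * norm z" unfolding y_def[symmetric]
    by (cases "norm y = 0") (auto simp: mult_le_cancel_left opnorm_nonneg)
qed

lemma opnorm_transpose_eq:
  fixes A :: "real^'n^'m"
  shows "opnorm (transpose A) = opnorm A"
  using opnorm_transpose[of A] opnorm_transpose[of "transpose A"] by simp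

lemma opnorm_mult:
  fixes A :: "real^'n^'m" and B :: "real^'k^'n"
  shows "opnorm (A ** B) \<le> opnorm A * opnorm B"
proof (rule opnorm_le)
  fix x
  have "norm ((A ** B) *v x) = norm (A *v (B *v x))" by (simp add: matrix_vector_mul_assoc)
  also have "\<dots> \<le> opnorm A * norm (B *v x)" by (rule opnorm_bound)
  also have "\<dots> \<le> opnorm A * (opnorm B * norm x)" by (intro mult_left_mono opnorm_bound opnorm_nonneg)
  finally show "norm ((A ** B) *v x) \<le> opnorm A * opnorm B * norm x" by (simp add: mult_ac)
qed

lemma opnorm_diff:
  fixes A B :: "real^'n^'m"
  shows "opnorm A \<le> opnorm (A - B) + opnorm B"
proof (rule opnorm_le)
  fix x
  have "norm (A *v x) = norm ((A - B) *v x + B *v x)" by (simp add: matrix_vector_mult_diff_rdistrib)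
  also have "\<dots> \<le> norm ((A - B) *v x) + norm (B *v x)" by (rule norm_triangle_ineq)
  also have "\<dots> \<le> opnorm (A - B) * norm x + opnorm B * norm x" by (intro add_mono opnorm_bound)
  finally show "norm (A *v x) \<le> (opnorm (A - B) + opnorm B) * norm x" by (simp add: algebra_simps)
qed

lemma lognorm_bound:
  fixes A :: "real^'n^'n"
  shows "x \<bullet> (A *v x) \<le> lognorm A * (x \<bullet> x)"
proof (cases "x = 0")
  case True then show ?thesis by simp
next
  case False
  have bdd: "bdd_above {(x \<bullet> (A *v x)) / (x \<bullet> x) | x. x \<noteq> 0}"
  proof (rule bdd_aboveI, clarify)
    fix y :: "real^'n" assume "y \<noteq> 0"
    have "y \<bullet> (A *v y) \<le> norm y * (opnorm A * norm y)"
      by (rule order_trans[OF norm_cauchy_schwarz]) (intro mult_left_mono opnorm_bound, simp)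
    then show "(y \<bullet> (A *v y)) / (y \<bullet> y) \<le> opnorm A" using \<open>y \<noteq> 0\<close>
      by (simp add: divide_le_eq power2_norm_eq_inner[symmetric] power2_eq_square mult_ac)
  qed
  have "(x \<bullet> (A *v x)) / (x \<bullet> x) \<le> lognorm A"
    unfolding lognorm_def by (rule cSup_upper[OF _ bdd]) (use False in blast)
  then show ?thesis using False by (simp add: divide_le_eq)
qed

lemma lipconst_bound:
  fixes f :: "real^'n \<Rightarrow> real^'k"
  assumes "L-lipschitz_on UNIV f"
  shows "norm (f u - f v) \<le> lipconst f * norm (u - v)" and "0 \<le> lipconst f"
proof -
  have bdd: "bdd_above {norm (f u - f v) / norm (u - v) | u v. u \<noteq> v}"
  proof (rule bdd_aboveI, clarify)
    fix u v :: "real^'n" assume "u \<noteq> v"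
    have "norm (f u - f v) \<le> L * norm (u - v)" using assms
      by (auto simp: lipschitz_on_def dist_norm)
    then show "norm (f u - f v) / norm (u - v) \<le> L" using \<open>u \<noteq> v\<close>
      by (simp add: divide_le_eq)
  qed
  have up: "norm (f u - f v) / norm (u - v) \<le> lipconst f" if "u \<noteq> v" for u v
    unfolding lipconst_def by (rule cSup_upper[OF _ bdd]) (use that in blast)
  show "norm (f u - f v) \<le> lipconst f * norm (u - v)"
    using up[of u v] by (cases "u = v") (auto simp: divide_le_eq)
  have "(0::real^'n) \<noteq> vec 1" by (simp add: vec_eq_iff)
  from up[OF this] show "0 \<le> lipconst f" by (rule order_trans[rotated]) simp
qed

lemma lipconst_op_bound:
  fixes F :: "real^'n \<Rightarrow> real^'a^'b"
  assumes "L-lipschitz_on UNIV F"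
  shows "opnorm (F u - F v) \<le> lipconst_op F * norm (u - v)" and "0 \<le> lipconst_op F"
proof -
  have bdd: "bdd_above {opnorm (F u - F v) / norm (u - v) | u v. u \<noteq> v}"
  proof (rule bdd_aboveI, clarify)
    fix u v :: "real^'n" assume "u \<noteq> v"
    have "norm (F u - F v) \<le> L * norm (u - v)" using assms
      by (auto simp: lipschitz_on_def dist_norm)
    then have "opnorm (F u - F v) \<le> real CARD('b) * (L * norm (u - v))"
      by (rule order_trans[OF opnorm_frob mult_left_mono]) simp
    then show "opnorm (F u - F v) / norm (u - v) \<le> real CARD('b) * L" using \<open>u \<noteq> v\<close>
      by (simp add: divide_le_eq mult_ac)
  qed
  have up: "opnorm (F u - F v) / norm (u - v) \<le> lipconst_op F" if "u \<noteq> v" for u v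
    unfolding lipconst_op_def by (rule cSup_upper[OF _ bdd]) (use that in blast)
  show "opnorm (F u - F v) \<le> lipconst_op F * norm (u - v)"
    using up[of u v] by (cases "u = v") (auto simp: divide_le_eq opnorm_def onorm_zero)
  have "(0::real^'n) \<noteq> vec 1" by (simp add: vec_eq_iff)
  from up[OF this] show "0 \<le> lipconst_op F" by (rule order_trans[rotated]) (simp add: opnorm_nonneg)
qed

lemma selmat_orth:
  fixes wp :: "'p::finite \<Rightarrow> 'd::finite"
  assumes "inj wp"
  shows "transpose (selmat wp) ** selmat wp = mat 1"
proof -
  have "(\<Sum>i\<in>UNIV. (if i = wp j then 1 else 0) * (if i = wp k then 1 else (0::real)))
        = (if j = k then 1 else 0)" for j k
  proof -
    have "(\<Sum>i\<in>UNIV. (if i = wp j then 1 else 0) * (if i = wp k then 1 else (0::real)))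
        = (\<Sum>i\<in>UNIV. if i = wp j then (if wp j = wp k then 1 else 0) else (0::real))"
      by (rule sum.cong) auto
    also have "\<dots> = (if wp j = wp k then 1 else 0)" by simp
    finally show ?thesis using inj_eq[OF assms] by simp
  qed
  then show ?thesis
    by (simp add: vec_eq_iff matrix_matrix_mult_def transpose_def selmat_def mat_def)
qed

lemma PP_bound:
  fixes Psi :: "real^'p^'d" and wp :: "'p \<Rightarrow> 'd"
  assumes "inj wp" "transpose Psi ** Psi = mat 1"
  shows "norm (transpose (deim_proj Psi wp) *v c)
         \<le> opnorm (matrix_inv (transpose (selmat wp) ** Psi)) * norm c"
proof -
  define Mi where "Mi = matrix_inv (transpose (selmat wp) ** Psi)"
  have "transpose (deim_proj Psi wp) *v c
        = selmat wp *v (transpose Mi *v (transpose Psi *v c))"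
    by (simp only: deim_proj_def Mi_def matrix_transpose_mul matrix_vector_mul_assoc matrix_mul_assoc transpose_transpose)
  then have "norm (transpose (deim_proj Psi wp) *v c) = norm (transpose Mi *v (transpose Psi *v c))"
    by (simp add: orth_norm[OF selmat_orth[OF assms(1)]])
  also have "\<dots> \<le> opnorm (transpose Mi) * norm (transpose Psi *v c)" by (rule opnorm_bound)
  also have "\<dots> \<le> opnorm Mi * norm c"
  proof -
    have "opnorm (transpose Mi) = opnorm Mi" by (rule opnorm_transpose_eq)
    moreover have "norm (transpose Psi *v c) \<le> norm c" by (rule orth_normT[OF assms(2)])
    ultimately show ?thesis by (metis mult_left_mono opnorm_nonneg)
  qed
  finally show ?thesis by (simp add: Mi_def)
qed

lemma key_ineq:
  fixes Q :: "real^'n^'n" and c :: "real^'d" and Jh :: "real^'n \<Rightarrow> real^'n^'d"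
    and Phi :: "real^'r^'n" and D :: "real^'r^'r" and Br :: "real^'m^'r"
    and PP :: "real^'d^'d"
    and X X' Dv :: "real^'n" and Xr :: "real^'r" and U :: "real^'m"
  assumes orth: "transpose Phi ** Phi = mat 1"
    and hg: "\<And>u v. norm (gradH Q c Jh u - gradH Q c Jh v) \<le> Lg * norm (u - v)"
    and hJ: "\<And>u v. opnorm (Jh u - Jh v) \<le> LJ * norm (u - v)"
    and hP: "norm (transpose PP *v c) \<le> Mi * norm c"
    and Lg: "0 \<le> Lg" and LJ: "0 \<le> LJ" and Mi: "0 \<le> Mi"
  shows "(transpose Phi *v X - Xr) \<bullet>
           (transpose Phi *v X' - (D *v gradHr Q c Jh Phi PP Xr + Br *v U))
         \<le> (lognorm (Phi ** D ** transpose Phi ** Q) + opnorm (D ** transpose Phi) * LJ * Mi * norm c)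
              * norm (transpose Phi *v X - Xr) ^ 2
           + norm (transpose Phi *v X - Xr) *
             (norm (X' - Dv)
              + norm (transpose Phi *v Dv - D *v (transpose Phi *v gradH Q c Jh X) - Br *v U)
              + opnorm (D ** transpose Phi) * Lg * norm (X - Phi *v (transpose Phi *v X))
              + opnorm D * norm c * opnorm ((mat 1 - PP) ** Jh (Phi *v (transpose Phi *v X)) ** Phi))"
proof -
  define er where "er = transpose Phi *v X - Xr"
  define z where "z = Phi *v (transpose Phi *v X)"
  define PhiT where "PhiT = transpose Phi"
  define K where "K = (mat 1 - PP) ** Jh z ** Phi"
  define rho where "rho = PhiT *v Dv - D *v (PhiT *v gradH Q c Jh X) - Br *v U"
  define t1 where "t1 = PhiT *v (X' - Dv)"
  define t3 where "t3 = (D ** PhiT) *v (gradH Q c Jh X - gradH Q c Jh z)"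
  define t4 where "t4 = D *v (PhiT *v (Q *v (Phi *v er)))"
  define t5 where "t5 = D *v (transpose K *v c)"
  define t6 where "t6 = (D ** PhiT) *v (transpose (Jh z - Jh (Phi *v Xr)) *v (transpose PP *v c))"
  have zer: "z - Phi *v Xr = Phi *v er"
    by (simp add: z_def er_def matrix_vector_mult_diff_distrib)
  have gz: "PhiT *v gradH Q c Jh z - gradHr Q c Jh Phi PP Xr
      = PhiT *v (Q *v (Phi *v er)) + PhiT *v (transpose (Jh z) *v (transpose (mat 1 - PP) *v c))
        + PhiT *v (transpose (Jh z - Jh (Phi *v Xr)) *v (transpose PP *v c))"
  proof -
    have tr: "transpose (mat 1 - PP) = mat 1 - transpose PP"
      by (simp add: vec_eq_iff transpose_def mat_def)
    have tr2: "transpose (Jh z - Jh (Phi *v Xr)) = transpose (Jh z) - transpose (Jh (Phi *v Xr))"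
      by (simp add: vec_eq_iff transpose_def)
    show ?thesis
      unfolding gradH_def gradHr_def PhiT_def tr tr2 zer[symmetric]
      by (simp add: matrix_vector_mult_diff_distrib matrix_vector_right_distrib
          matrix_vector_mult_diff_rdistrib matrix_vector_mult_add_rdistrib algebra_simps)
  qed
  have Kt: "transpose K *v c = PhiT *v (transpose (Jh z) *v (transpose (mat 1 - PP) *v c))"
    by (simp only: K_def PhiT_def matrix_transpose_mul matrix_vector_mul_assoc matrix_mul_assoc)
  have decomp: "transpose Phi *v X' - (D *v gradHr Q c Jh Phi PP Xr + Br *v U)
        = t1 + rho + t3 + t4 + t5 + t6"
  proof -
    have "D *v (PhiT *v gradH Q c Jh X) - D *v gradHr Q c Jh Phi PP Xr
        = t3 + D *v (PhiT *v gradH Q c Jh z - gradHr Q c Jh Phi PP Xr)"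
      by (simp add: t3_def matrix_vector_mul_assoc[symmetric] matrix_vector_mult_diff_distrib)
    also have "\<dots> = t3 + t4 + t5 + t6"
      unfolding gz Kt[symmetric]
      by (simp add: t4_def t5_def t6_def matrix_vector_right_distrib matrix_vector_mul_assoc[symmetric])
    finally have *: "D *v (PhiT *v gradH Q c Jh X) - D *v gradHr Q c Jh Phi PP Xr = t3 + t4 + t5 + t6" .
    have "transpose Phi *v X' - (D *v gradHr Q c Jh Phi PP Xr + Br *v U)
         = t1 + rho + (D *v (PhiT *v gradH Q c Jh X) - D *v gradHr Q c Jh Phi PP Xr)"
      by (simp add: t1_def rho_def PhiT_def matrix_vector_mult_diff_distrib algebra_simps)
    then show ?thesis using * by (simp add: algebra_simps)
  qed
  have nPhiT: "norm (PhiT *v w) \<le> norm w" for w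
    unfolding PhiT_def by (rule orth_normT[OF orth])
  have b1: "er \<bullet> t1 \<le> norm er * norm (X' - Dv)"
    by (rule order_trans[OF norm_cauchy_schwarz]) (simp add: t1_def mult_left_mono nPhiT)
  have b2: "er \<bullet> rho \<le> norm er * norm rho" by (rule norm_cauchy_schwarz)
  have b3: "er \<bullet> t3 \<le> norm er * (opnorm (D ** PhiT) * Lg * norm (X - z))"
  proof -
    have "norm t3 \<le> opnorm (D ** PhiT) * norm (gradH Q c Jh X - gradH Q c Jh z)"
      unfolding t3_def by (rule opnorm_bound)
    also have "\<dots> \<le> opnorm (D ** PhiT) * (Lg * norm (X - z))"
      by (intro mult_left_mono hg opnorm_nonneg)
    finally show ?thesis
      by (intro order_trans[OF norm_cauchy_schwarz] mult_left_mono) (auto simp: mult_ac)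
  qed
  have b4: "er \<bullet> t4 \<le> lognorm (Phi ** D ** transpose Phi ** Q) * norm er ^ 2"
  proof -
    have "er \<bullet> t4 = (Phi *v er) \<bullet> (Phi *v t4)" by (simp add: orth_inner[OF orth])
    also have "Phi *v t4 = (Phi ** D ** transpose Phi ** Q) *v (Phi *v er)"
      by (simp add: t4_def PhiT_def matrix_vector_mul_assoc matrix_mul_assoc)
    finally have "er \<bullet> t4 = (Phi *v er) \<bullet> ((Phi ** D ** transpose Phi ** Q) *v (Phi *v er))" .
    also have "\<dots> \<le> lognorm (Phi ** D ** transpose Phi ** Q) * ((Phi *v er) \<bullet> (Phi *v er))"
      by (rule lognorm_bound)
    finally show ?thesis by (simp add: orth_inner[OF orth] power2_norm_eq_inner)
  qed
  have b5: "er \<bullet> t5 \<le> norm er * (opnorm D * norm c * opnorm K)"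
  proof -
    have "norm t5 \<le> opnorm D * norm (transpose K *v c)" unfolding t5_def by (rule opnorm_bound)
    also have "\<dots> \<le> opnorm D * (opnorm K * norm c)"
      by (intro mult_left_mono opnorm_nonneg) (metis opnorm_bound opnorm_transpose_eq)
    finally show ?thesis
      by (intro order_trans[OF norm_cauchy_schwarz] mult_left_mono) (auto simp: mult_ac)
  qed
  have b6: "er \<bullet> t6 \<le> opnorm (D ** PhiT) * LJ * Mi * norm c * norm er ^ 2"
  proof -
    have "norm t6 \<le> opnorm (D ** PhiT) * norm (transpose (Jh z - Jh (Phi *v Xr)) *v (transpose PP *v c))"
      unfolding t6_def by (rule opnorm_bound)
    also have "\<dots> \<le> opnorm (D ** PhiT) * (opnorm (Jh z - Jh (Phi *v Xr)) * (Mi * norm c))"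
    proof (intro mult_left_mono opnorm_nonneg)
      have "norm (transpose (Jh z - Jh (Phi *v Xr)) *v (transpose PP *v c))
          \<le> opnorm (Jh z - Jh (Phi *v Xr)) * norm (transpose PP *v c)"
        by (metis opnorm_bound opnorm_transpose_eq)
      also have "\<dots> \<le> opnorm (Jh z - Jh (Phi *v Xr)) * (Mi * norm c)"
        by (intro mult_left_mono hP opnorm_nonneg)
      finally show "norm (transpose (Jh z - Jh (Phi *v Xr)) *v (transpose PP *v c))
          \<le> opnorm (Jh z - Jh (Phi *v Xr)) * (Mi * norm c)" .
    qed
    also have "\<dots> \<le> opnorm (D ** PhiT) * ((LJ * norm er) * (Mi * norm c))"
    proof (intro mult_left_mono mult_right_mono opnorm_nonneg)
      show "opnorm (Jh z - Jh (Phi *v Xr)) \<le> LJ * norm er"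
        using hJ[of z "Phi *v Xr"] by (simp add: zer orth_norm[OF orth])
      show "0 \<le> Mi * norm c" using Mi by simp
    qed
    finally have "norm t6 \<le> opnorm (D ** PhiT) * ((LJ * norm er) * (Mi * norm c))" .
    then have "er \<bullet> t6 \<le> norm er * (opnorm (D ** PhiT) * ((LJ * norm er) * (Mi * norm c)))"
      by (intro order_trans[OF norm_cauchy_schwarz] mult_left_mono) auto
    then show ?thesis by (simp add: power2_eq_square mult_ac)
  qed
  have calc: "er \<bullet> (t1 + rho + t3 + t4 + t5 + t6) \<le> norm er * norm (X' - Dv) + norm er * norm rho
       + norm er * (opnorm (D ** PhiT) * Lg * norm (X - z))
       + lognorm (Phi ** D ** transpose Phi ** Q) * norm er ^ 2
       + norm er * (opnorm D * norm c * opnorm K)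
       + opnorm (D ** PhiT) * LJ * Mi * norm c * norm er ^ 2"
    using b1 b2 b3 b4 b5 b6 by (simp add: inner_add_right)
  have fin: "er \<bullet> (transpose Phi *v X' - (D *v gradHr Q c Jh Phi PP Xr + Br *v U))
    \<le> (lognorm (Phi ** D ** PhiT ** Q) + opnorm (D ** PhiT) * LJ * Mi * norm c) * norm er ^ 2
       + norm er * (norm (X' - Dv) + norm rho + opnorm (D ** PhiT) * Lg * norm (X - z)
          + opnorm D * norm c * opnorm K)"
    unfolding decomp by (rule order_trans[OF calc]) (simp add: PhiT_def algebra_simps)
  show ?thesis using fin unfolding er_def z_def PhiT_def K_def rho_def .
qed

lemma young_sq:
  fixes N K F :: real
  assumes N: "0 \<le> N" and K: "0 \<le> K" and F: "0 \<le> F"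
    and h: "\<And>l. l > 0 \<Longrightarrow> N \<le> (l * K + F / l) / 2"
  shows "N^2 \<le> K * F"
proof (cases "K > 0 \<and> F > 0")
  case True
  define l where "l = sqrt (F / K)"
  have l: "l > 0" using True by (simp add: l_def)
  have "l * K = sqrt (K * F)" using True unfolding l_def
    by (simp add: real_sqrt_divide real_sqrt_mult field_simps)
  moreover have "F / l = sqrt (K * F)" using True unfolding l_def
    by (simp add: real_sqrt_divide real_sqrt_mult field_simps)
  ultimately have "N \<le> sqrt (K * F)" using h[OF l] by simp
  then have "N^2 \<le> (sqrt (K * F))^2" using N by (intro power_mono) auto
  then show ?thesis using K F by simp
next
  case False
  have "N \<le> 0"
  proof (rule ccontr)
    assume "\<not> N \<le> 0"
    then have Np: "N > 0" by simp
    show False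
    proof (cases "F = 0")
      case True
      define l where "l = N / (K + 1)"
      have l: "l > 0" using Np K by (simp add: l_def)
      have "N \<le> l * K / 2" using h[OF l] True by simp
      also have "\<dots> < N" using Np K by (simp add: l_def field_simps add_nonneg_pos)
      finally show False by simp
    next
      case Fn: False
      then have "K = 0" using False K F by auto
      define l where "l = 2 * (F + 1) / N"
      have l: "l > 0" using Np F by (simp add: l_def)
      have "N \<le> F / l / 2" using h[OF l] \<open>K = 0\<close> by simp
      also have "\<dots> = F * N / (4 * (F + 1))" using Np F by (simp add: l_def field_simps)
      also have "\<dots> < N"
      proof -
        have "F * N < (4 * (F + 1)) * N" using Np F by (intro mult_strict_right_mono) auto
        then show ?thesis using F by (simp add: divide_less_eq) (metis mult.commute)
      qed
      finally show False by simp
    qed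
  qed
  then have "N = 0" using N by simp
  then show ?thesis using K F by simp
qed

lemma gronwall_aux:
  fixes E E' :: "real \<Rightarrow> 'a::real_inner" and f :: "real \<Rightarrow> real"
  assumes t: "0 \<le> t"
    and der: "\<And>s. s \<in> {0..t} \<Longrightarrow> (E has_vector_derivative E' s) (at s within {0..t})"
    and E0: "E 0 = 0"
    and ineq: "\<And>s. s \<in> {0..t} \<Longrightarrow> E s \<bullet> E' s \<le> C * norm (E s)^2 + norm (E s) * f s"
    and fpos: "\<And>s. s \<in> {0..t} \<Longrightarrow> 0 \<le> f s"
    and fint: "(\<lambda>s. exp (- C * s) * f s) integrable_on {0..t}"
  shows "exp (- C * t) * norm (E t) \<le> integral {0..t} (\<lambda>s. exp (- C * s) * f s)"
proof -
  define G where "G = integral {0..t} (\<lambda>s. exp (- C * s) * f s)"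
  define M where "M = \<bar>C\<bar> * exp (\<bar>C\<bar> * t)"
  have M: "0 \<le> M" by (simp add: M_def)
  have main: "exp (- C * t) * norm (E t) \<le> G + (1 + M*t) * sqrt e" if e: "e > 0" for e
  proof -
    define \<phi> where "\<phi> s = sqrt (E s \<bullet> E s + e)" for s
    define \<psi> where "\<psi> s = exp (- C * s) * \<phi> s" for s
    define \<psi>' where "\<psi>' s = exp (- C * s) * ((E s \<bullet> E' s) / \<phi> s - C * \<phi> s)" for s
    have pos: "0 < E s \<bullet> E s + e" for s using e by (simp add: add_nonneg_pos)
    have phipos: "sqrt e \<le> \<phi> s" for s unfolding \<phi>_def by simp
    have phigt: "0 < \<phi> s" for s using pos[of s] by (simp add: \<phi>_def)
    have phiE: "norm (E s) \<le> \<phi> s" for s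
      unfolding \<phi>_def norm_eq_sqrt_inner using e by simp
    have phisq: "(\<phi> s)^2 = norm (E s)^2 + e" for s
      using pos[of s] by (simp add: \<phi>_def power2_norm_eq_inner)
    have dpsi: "(\<psi> has_real_derivative \<psi>' s) (at s within {0..t})" if s: "s \<in> {0..t}" for s
    proof -
      have "((\<lambda>x. E x \<bullet> E x) has_derivative
          (\<lambda>h. E s \<bullet> (h *\<^sub>R E' s) + (h *\<^sub>R E' s) \<bullet> E s)) (at s within {0..t})"
        using has_derivative_inner[OF der[OF s, unfolded has_vector_derivative_def]
            der[OF s, unfolded has_vector_derivative_def]] .
      moreover have "(\<lambda>h. E s \<bullet> (h *\<^sub>R E' s) + (h *\<^sub>R E' s) \<bullet> E s) = (*) (2 * (E s \<bullet> E' s))"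
        by (auto simp: inner_commute algebra_simps)
      ultimately have dq: "((\<lambda>x. E x \<bullet> E x + e) has_real_derivative 2 * (E s \<bullet> E' s)) (at s within {0..t})"
        unfolding has_field_derivative_def
        using has_derivative_add_const by fastforce
      have dphi: "(\<phi> has_real_derivative inverse (\<phi> s) / 2 * (2 * (E s \<bullet> E' s))) (at s within {0..t})"
        unfolding \<phi>_def by (rule DERIV_chain2[OF DERIV_real_sqrt[OF pos] dq])
      have dexp: "((\<lambda>x. exp (- C * x)) has_real_derivative exp (- C * s) * (-C)) (at s within {0..t})"
        by (auto intro!: derivative_eq_intros)
      have "(\<psi> has_real_derivative exp (- C * s) * (-C) * \<phi> s + inverse (\<phi> s) / 2 * (2 * (E s \<bullet> E' s)) * exp (- C * s))
          (at s within {0..t})"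
        unfolding \<psi>_def[abs_def] by (rule DERIV_mult[OF dexp dphi])
      moreover have "exp (- C * s) * (-C) * \<phi> s + inverse (\<phi> s) / 2 * (2 * (E s \<bullet> E' s)) * exp (- C * s) = \<psi>' s"
        unfolding \<psi>'_def using phigt[of s] by (simp add: field_simps)
      ultimately show ?thesis by simp
    qed
    have int: "(\<psi>' has_integral \<psi> t - \<psi> 0) {0..t}"
      by (rule fundamental_theorem_of_calculus[OF t])
         (use dpsi in \<open>simp add: has_real_derivative_iff_has_vector_derivative\<close>)
    have bnd: "\<psi>' s \<le> exp (- C * s) * f s + M * sqrt e" if s: "s \<in> {0..t}" for s
    proof -
      have "(E s \<bullet> E' s) / \<phi> s \<le> (C * norm (E s)^2 + norm (E s) * f s) / \<phi> s"
        using ineq[OF s] phigt[of s] by (simp add: divide_right_mono)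
      also have "\<dots> = C * (norm (E s)^2 / \<phi> s) + (norm (E s) / \<phi> s) * f s"
        using phigt[of s] by (simp add: field_simps)
      finally have a: "(E s \<bullet> E' s) / \<phi> s \<le> C * (norm (E s)^2 / \<phi> s) + (norm (E s) / \<phi> s) * f s" .
      have b: "(norm (E s) / \<phi> s) * f s \<le> f s"
        using phiE[of s] phigt[of s] fpos[OF s] by (intro mult_left_le_one_le) (auto simp: field_simps)
      have c: "C * (norm (E s)^2 / \<phi> s) - C * \<phi> s = - C * (e / \<phi> s)"
        using phigt[of s] phisq[of s] by (simp add: field_simps power2_eq_square)
      have d: "e / \<phi> s \<le> sqrt e"
      proof -
        have "e / \<phi> s \<le> e / sqrt e" using e phipos[of s] phigt[of s] by (intro divide_left_mono) auto
        also have "\<dots> = sqrt e" using e by (simp add: real_div_sqrt less_imp_le)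
        finally show ?thesis .
      qed
      have "- C * (e / \<phi> s) \<le> \<bar>C\<bar> * sqrt e"
      proof -
        have "- C * (e / \<phi> s) \<le> \<bar>C\<bar> * (e / \<phi> s)"
          using e phigt[of s] by (intro mult_right_mono) auto
        also have "\<dots> \<le> \<bar>C\<bar> * sqrt e" by (intro mult_left_mono d) auto
        finally show ?thesis .
      qed
      then have inner: "(E s \<bullet> E' s) / \<phi> s - C * \<phi> s \<le> f s + \<bar>C\<bar> * sqrt e"
        using a b c by linarith
      have ex: "exp (- C * s) \<le> exp (\<bar>C\<bar> * t)"
      proof -
        have "- C * s \<le> \<bar>C\<bar> * s" using s by (intro mult_right_mono) auto
        also have "\<dots> \<le> \<bar>C\<bar> * t" using s by (intro mult_left_mono) auto
        finally show ?thesis by simp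
      qed
      have "\<psi>' s \<le> exp (- C * s) * (f s + \<bar>C\<bar> * sqrt e)"
        unfolding \<psi>'_def by (intro mult_left_mono inner) auto
      also have "\<dots> = exp (- C * s) * f s + exp (- C * s) * (\<bar>C\<bar> * sqrt e)" by (simp add: algebra_simps)
      also have "\<dots> \<le> exp (- C * s) * f s + M * sqrt e"
      proof -
        have "exp (- C * s) * (\<bar>C\<bar> * sqrt e) \<le> exp (\<bar>C\<bar> * t) * (\<bar>C\<bar> * sqrt e)"
          using ex e by (intro mult_right_mono) auto
        then show ?thesis by (simp add: M_def mult_ac)
      qed
      finally show ?thesis .
    qed
    have "\<psi> t - \<psi> 0 \<le> integral {0..t} (\<lambda>s. exp (- C * s) * f s + M * sqrt e)"
      using int fint bnd by (intro has_integral_le[OF int integrable_integral]) (auto intro: integrable_add)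
    also have "\<dots> = G + M * sqrt e * t"
      using fint t by (subst integral_add) (auto simp: G_def)
    finally have "\<psi> t \<le> G + M * sqrt e * t + sqrt e"
      using E0 by (simp add: \<psi>_def \<phi>_def)
    moreover have "exp (- C * t) * norm (E t) \<le> \<psi> t"
      unfolding \<psi>_def by (intro mult_left_mono phiE) auto
    ultimately show ?thesis by (simp add: algebra_simps)
  qed
  show ?thesis
  proof (rule ccontr)
    assume "\<not> ?thesis"
    then have dpos: "0 < exp (- C * t) * norm (E t) - G" by (simp add: G_def)
    define K where "K = 1 + M * t"
    have K: "K > 0" using M t by (simp add: K_def add_pos_nonneg)
    define e where "e = ((exp (- C * t) * norm (E t) - G) / (2 * K))^2"
    have e: "e > 0" using dpos K by (simp add: e_def)
    have "sqrt e = (exp (- C * t) * norm (E t) - G) / (2 * K)"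
      using dpos K by (simp add: e_def)
    then have "(1 + M*t) * sqrt e = (exp (- C * t) * norm (E t) - G) / 2"
      using K by (simp add: K_def field_simps)
    then have "exp (- C * t) * norm (E t) \<le> G + (exp (- C * t) * norm (E t) - G) / 2"
      using main[OF e] by linarith
    then show False using dpos by (simp add: field_simps)
  qed
qed

lemma opnorm_lip:
  fixes A :: "real^'k^'m" and M N :: "real^'n^'k" and B :: "real^'p^'n"
  shows "\<bar>opnorm (A ** M ** B) - opnorm (A ** N ** B)\<bar> \<le> opnorm A * (real CARD('k) * norm (M - N)) * opnorm B"
proof -
  have "opnorm (A ** M ** B - A ** N ** B) \<le> opnorm A * opnorm (M - N) * opnorm B"
  proof (rule opnorm_le)
    fix x
    have "(A ** M ** B - A ** N ** B) *v x = A *v ((M - N) *v (B *v x))"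
      by (simp add: matrix_vector_mult_diff_rdistrib matrix_vector_mult_diff_distrib matrix_vector_mul_assoc[symmetric])
    then have "norm ((A ** M ** B - A ** N ** B) *v x) = norm (A *v ((M - N) *v (B *v x)))" by simp
    also have "\<dots> \<le> opnorm A * norm ((M - N) *v (B *v x))" by (rule opnorm_bound)
    also have "\<dots> \<le> opnorm A * (opnorm (M - N) * (opnorm B * norm x))"
      by (intro mult_left_mono order_trans[OF opnorm_bound] opnorm_nonneg opnorm_bound) 
    finally show "norm ((A ** M ** B - A ** N ** B) *v x) \<le> opnorm A * opnorm (M - N) * opnorm B * norm x"
      by (simp add: mult_ac)
  qed
  also have "\<dots> \<le> opnorm A * (real CARD('k) * norm (M - N)) * opnorm B"
    by (intro mult_right_mono mult_left_mono opnorm_frob opnorm_nonneg)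
  finally have *: "opnorm (A ** M ** B - A ** N ** B) \<le> opnorm A * (real CARD('k) * norm (M - N)) * opnorm B" .
  have "opnorm (A ** N ** B - A ** M ** B) \<le> opnorm A * opnorm (N - M) * opnorm B"
  proof (rule opnorm_le)
    fix x
    have "(A ** N ** B - A ** M ** B) *v x = A *v ((N - M) *v (B *v x))"
      by (simp add: matrix_vector_mult_diff_rdistrib matrix_vector_mult_diff_distrib matrix_vector_mul_assoc[symmetric])
    then have "norm ((A ** N ** B - A ** M ** B) *v x) = norm (A *v ((N - M) *v (B *v x)))" by simp
    also have "\<dots> \<le> opnorm A * norm ((N - M) *v (B *v x))" by (rule opnorm_bound)
    also have "\<dots> \<le> opnorm A * (opnorm (N - M) * (opnorm B * norm x))"
      by (intro mult_left_mono order_trans[OF opnorm_bound] opnorm_nonneg opnorm_bound) 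
    finally show "norm ((A ** N ** B - A ** M ** B) *v x) \<le> opnorm A * opnorm (N - M) * opnorm B * norm x"
      by (simp add: mult_ac)
  qed
  also have "\<dots> \<le> opnorm A * (real CARD('k) * norm (M - N)) * opnorm B"
    by (intro mult_right_mono mult_left_mono opnorm_nonneg)
       (metis norm_minus_commute opnorm_frob)
  finally have **: "opnorm (A ** N ** B - A ** M ** B) \<le> opnorm A * (real CARD('k) * norm (M - N)) * opnorm B" .
  show ?thesis using * ** opnorm_diff[of "A ** M ** B" "A ** N ** B"] opnorm_diff[of "A ** N ** B" "A ** M ** B"]
    by linarith
qed

lemma vd_matrix:
  fixes A :: "real^'n^'m"
  assumes "(g has_vector_derivative g') F"
  shows "((\<lambda>t. A *v g t) has_vector_derivative A *v g') F"
proof -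
  have "((\<lambda>t. A *v g t) has_derivative (\<lambda>h. A *v (h *\<^sub>R g'))) F"
    using bounded_linear.has_derivative[OF matrix_vector_mul_bounded_linear assms[unfolded has_vector_derivative_def]] .
  then show ?thesis unfolding has_vector_derivative_def by (simp add: matrix_vector_mult_scaleR)
qed

lemma sq4: "((p::real) + q + r + s)^2 \<le> 4 * (p^2 + q^2 + r^2 + s^2)"
proof -
  have "0 \<le> (p-q)^2 + (p-r)^2 + (p-s)^2 + (q-r)^2 + (q-s)^2 + (r-s)^2" by simp
  then show ?thesis by (simp add: power2_eq_square algebra_simps)
qed

lemma young_pt:
  fixes g f l :: real
  assumes "l > 0"
  shows "g * f \<le> (l * g^2 + f^2 / l) / 2"
proof -
  have "0 \<le> (l * g - f)^2" by simp
  then have "2 * (l * (g * f)) \<le> l * (l * g^2) + f^2" by (simp add: power2_eq_square algebra_simps)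
  then have "2 * (g * f) \<le> (l * (l * g^2) + f^2) / l" using assms by (simp add: le_divide_eq mult_ac)
  then show ?thesis using assms by (simp add: field_simps)
qed

lemma exp_int:
  fixes C t :: real
  assumes "0 \<le> t"
  shows "((\<lambda>s. exp (2 * C * (t - s))) has_integral (if C = 0 then t else (exp (2 * C * t) - 1) / (2 * C))) {0..t}"
proof (cases "C = 0")
  case True
  then show ?thesis using has_integral_const_real[of "1::real" 0 t] assms by simp
next
  case False
  note Cnz = this
  have "((\<lambda>s. exp (2 * C * (t - s))) has_integral
      (- exp (2 * C * (t - t)) / (2 * C)) - (- exp (2 * C * (t - 0)) / (2 * C))) {0..t}"
  proof (rule fundamental_theorem_of_calculus[OF assms])
    fix s assume "s \<in> {0..t}"
    have "((\<lambda>s. - exp (2 * C * (t - s)) / (2 * C)) has_real_derivative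
        - (exp (2 * C * (t - s)) * (2 * C * (0 - 1))) / (2 * C)) (at s within {0..t})"
      by (intro derivative_eq_intros) (use Cnz in auto)
    moreover have "- (exp (2 * C * (t - s)) * (2 * C * (0 - 1))) / (2 * C) = exp (2 * C * (t - s))"
      using Cnz by (simp add: field_simps)
    ultimately show "((\<lambda>s. - exp (2 * C * (t - s)) / (2 * C)) has_vector_derivative exp (2 * C * (t - s)))
        (at s within {0..t})"
      by (simp add: has_real_derivative_iff_has_vector_derivative)
  qed
  then show ?thesis using Cnz by (simp add: field_simps)
qed

lemma exp_int_mono:
  fixes C t T :: real
  assumes "0 \<le> t" "t \<le> T"
  shows "(if C = 0 then t else (exp (2 * C * t) - 1) / (2 * C))
       \<le> (if C = 0 then T else (exp (2 * C * T) - 1) / (2 * C))"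
proof (cases "C = 0")
  case True then show ?thesis using assms by simp
next
  case False
  show ?thesis
  proof (cases "C > 0")
    case True
    then have "exp (2 * C * t) \<le> exp (2 * C * T)" using assms by simp
    then show ?thesis using True by (simp add: divide_right_mono)
  next
    case False2: False
    then have Cn: "C < 0" using False by simp
    then have "exp (2 * C * T) \<le> exp (2 * C * t)" using assms by (simp add: mult_left_mono_neg)
    then have "(exp (2 * C * t) - 1) / (2 * C) \<le> (exp (2 * C * T) - 1) / (2 * C)"
      using Cn by (simp add: divide_right_mono_neg)
    then show ?thesis using False by simp
  qed
qed

theorem theorem1:
  fixes T :: real
    and J R Q :: "real^'n^'n"
    and B :: "real^'m^'n"
    and u :: "real \<Rightarrow> real^'m"
    and c :: "real^'d"
    and h :: "real^'n \<Rightarrow> real^'d"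
    and Jh :: "real^'n \<Rightarrow> real^'n^'d"
    and x x' :: "real \<Rightarrow> real^'n"
    and x0 :: "real^'n"
    and Phi :: "real^'r^'n"
    and Jr Rr :: "real^'r^'r"
    and Br :: "real^'m^'r"
    and Psi :: "real^'p^'d"
    and wp :: "'p \<Rightarrow> 'd"
    and xr :: "real \<Rightarrow> real^'r"
    and Dt :: "real \<Rightarrow> real^'n"
  assumes T_pos: "T > 0"
    and J_skew: "transpose J = - J"
    and R_sym: "transpose R = R"
    and R_psd: "\<forall>v. v \<bullet> (R *v v) \<ge> 0"
    and Q_sym: "transpose Q = Q"
    and h_deriv: "\<forall>z. (h has_derivative (\<lambda>v. Jh z *v v)) (at z)"
    and Jh_cont: "continuous_on UNIV Jh"
    and x_deriv: "\<forall>t\<in>{0..T}. (x has_vector_derivative x' t) (at t within {0..T})"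
    and x_ode: "\<forall>t\<in>{0..T}. x' t = (J - R) *v gradH Q c Jh (x t) + B *v u t"
    and x_init: "x 0 = x0"
    and Phi_orth: "transpose Phi ** Phi = mat 1"
    and Psi_orth: "transpose Psi ** Psi = mat 1"
    and wp_inj: "inj wp"
    and PPsi_inv: "invertible (transpose (selmat wp) ** Psi)"
    and xr_deriv: "\<forall>t\<in>{0..T}. (xr has_vector_derivative
          ((Jr - Rr) *v gradHr Q c Jh Phi (deim_proj Psi wp) (xr t) + Br *v u t))
          (at t within {0..T})"
    and xr_init: "xr 0 = transpose Phi *v x0"
    and gradH_lip: "\<exists>L. L-lipschitz_on UNIV (gradH Q c Jh)"
    and Jh_lip: "\<exists>L. L-lipschitz_on UNIV Jh"
    and int_Dt: "(\<lambda>t. norm (x' t - Dt t)^2) integrable_on {0..T}"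
    and int_res: "(\<lambda>t. norm (transpose Phi *v Dt t
                     - (Jr - Rr) *v (transpose Phi *v gradH Q c Jh (x t)) - Br *v u t)^2)
                  integrable_on {0..T}"
  shows
    "let Dr = Jr - Rr;
         PP = deim_proj Psi wp;
         C1 = lognorm (Phi ** Dr ** transpose Phi ** Q)
              + opnorm (Dr ** transpose Phi) * lipconst_op Jh
                * opnorm (matrix_inv (transpose (selmat wp) ** Psi)) * norm c;
         C2 = opnorm (Dr ** transpose Phi) * lipconst (gradH Q c Jh);
         C3 = opnorm Dr * norm c;
         \<alpha> = 4 * integral {0..T} (\<lambda>\<tau>. exp (2 * C1 * (T - \<tau>)));
         CT = Max {1 + C2^2 * T * \<alpha>, C3^2 * T * \<alpha>, T * \<alpha>}
     in integral {0..T} (\<lambda>t. norm (x t - Phi *v xr t)^2)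
        \<le> CT * ( integral {0..T} (\<lambda>t. norm (x t - Phi *v (transpose Phi *v x t))^2)
               + integral {0..T} (\<lambda>t. norm (x' t - Dt t)^2)
               + integral {0..T} (\<lambda>t. norm (transpose Phi *v Dt t
                     - Dr *v (transpose Phi *v gradH Q c Jh (x t)) - Br *v u t)^2)
               + integral {0..T} (\<lambda>t. opnorm ((mat 1 - PP) ** Jh (Phi *v (transpose Phi *v x t)) ** Phi)^2))"
proof -
  define Dr where "Dr = Jr - Rr"
  define PP where "PP = deim_proj Psi wp"
  define Lg where "Lg = lipconst (gradH Q c Jh)"
  define LJ where "LJ = lipconst_op Jh"
  define Mi where "Mi = opnorm (matrix_inv (transpose (selmat wp) ** Psi))"
  define C1 where "C1 = lognorm (Phi ** Dr ** transpose Phi ** Q) + opnorm (Dr ** transpose Phi) * LJ * Mi * norm c"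
  define C2 where "C2 = opnorm (Dr ** transpose Phi) * Lg"
  define C3 where "C3 = opnorm Dr * norm c"
  define kk where "kk t = (if C1 = 0 then t else (exp (2 * C1 * t) - 1) / (2 * C1))" for t
  define \<alpha> where "\<alpha> = 4 * integral {0..T} (\<lambda>\<tau>. exp (2 * C1 * (T - \<tau>)))"
  define CT where "CT = Max {1 + C2^2 * T * \<alpha>, C3^2 * T * \<alpha>, T * \<alpha>}"
  define er where "er s = transpose Phi *v x s - xr s" for s
  define er' where "er' s = transpose Phi *v x' s - ((Jr - Rr) *v gradHr Q c Jh Phi PP (xr s) + Br *v u s)" for s
  define a where "a t = norm (x' t - Dt t)" for t
  define b where "b t = norm (transpose Phi *v Dt t - Dr *v (transpose Phi *v gradH Q c Jh (x t)) - Br *v u t)" for t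
  define w where "w t = norm (x t - Phi *v (transpose Phi *v x t))" for t
  define v where "v t = opnorm ((mat 1 - PP) ** Jh (Phi *v (transpose Phi *v x t)) ** Phi)" for t
  define f where "f t = a t + b t + C2 * w t + C3 * v t" for t
  define A where "A = integral {0..T} (\<lambda>t. a t ^ 2)"
  define B' where "B' = integral {0..T} (\<lambda>t. b t ^ 2)"
  define W where "W = integral {0..T} (\<lambda>t. w t ^ 2)"
  define V where "V = integral {0..T} (\<lambda>t. v t ^ 2)"
  define S where "S = {0..T}"
  have T0: "0 \<le> T" using T_pos by simp
  have Sleb: "S \<in> sets lebesgue" by (simp add: S_def)
  obtain L0 where L0: "L0-lipschitz_on UNIV (gradH Q c Jh)" using gradH_lip by blast
  note hg = lipconst_bound(1)[OF L0, folded Lg_def]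
  note Lg0 = lipconst_bound(2)[OF L0, folded Lg_def]
  obtain L1 where L1: "L1-lipschitz_on UNIV Jh" using Jh_lip by blast
  note hJ = lipconst_op_bound(1)[OF L1, folded LJ_def]
  note LJ0 = lipconst_op_bound(2)[OF L1, folded LJ_def]
  note hP = PP_bound[OF wp_inj Psi_orth, of c, folded PP_def Mi_def]
  have Mi0: "0 \<le> Mi" by (simp add: Mi_def opnorm_nonneg)
  have C20: "0 \<le> C2" using Lg0 by (simp add: C2_def opnorm_nonneg)
  have C30: "0 \<le> C3" by (simp add: C3_def opnorm_nonneg)
  have a0: "0 \<le> a t" for t by (simp add: a_def)
  have b0: "0 \<le> b t" for t by (simp add: b_def)
  have w0: "0 \<le> w t" for t by (simp add: w_def)
  have v0: "0 \<le> v t" for t by (simp add: v_def opnorm_nonneg)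
  have f0: "0 \<le> f t" for t using a0 b0 w0 v0 C20 C30 by (simp add: f_def)

  have xc: "continuous_on S x" unfolding S_def continuous_on_eq_continuous_within
    using x_deriv has_vector_derivative_continuous by blast
  have xrc: "continuous_on S xr" unfolding S_def continuous_on_eq_continuous_within
    using xr_deriv has_vector_derivative_continuous by blast
  have zc: "continuous_on S (\<lambda>t. Phi *v (transpose Phi *v x t))"
    using linear_continuous_on_compose[OF linear_continuous_on_compose[OF xc matrix_vector_mul_linear[of "transpose Phi"]]
      matrix_vector_mul_linear[of Phi]] .
  have erc: "continuous_on S er" unfolding er_def
    by (intro continuous_intros xrc linear_continuous_on_compose[OF xc matrix_vector_mul_linear])
  have wc: "continuous_on S w" unfolding w_def[abs_def]
    by (intro continuous_intros xc zc)
  have gvc: "continuous_on UNIV (\<lambda>M. opnorm ((mat 1 - PP) ** M ** Phi))"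
  proof (rule lipschitz_on_continuous_on)
    show "(opnorm (mat 1 - PP) * real CARD('d) * opnorm Phi)-lipschitz_on UNIV (\<lambda>M. opnorm ((mat 1 - PP) ** M ** Phi))"
      unfolding lipschitz_on_def dist_norm real_norm_def
      using opnorm_lip[of "mat 1 - PP" _ Phi] by (auto simp: mult_ac opnorm_nonneg)
  qed
  have vc: "continuous_on S v" unfolding v_def[abs_def]
    by (rule continuous_on_compose2[OF gvc continuous_on_compose2[OF Jh_cont zc]]) auto

  have a2i: "(\<lambda>t. a t ^ 2) integrable_on S" using int_Dt by (simp add: a_def S_def)
  have b2i: "(\<lambda>t. b t ^ 2) integrable_on S" using int_res by (simp add: b_def Dr_def S_def)
  have w2i: "(\<lambda>t. w t ^ 2) integrable_on S" unfolding S_def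
    by (rule integrable_continuous_real) (use wc in \<open>auto intro!: continuous_intros simp: S_def\<close>)
  have v2i: "(\<lambda>t. v t ^ 2) integrable_on S" unfolding S_def
    by (rule integrable_continuous_real) (use vc in \<open>auto intro!: continuous_intros simp: S_def\<close>)
  have wi: "w integrable_on S" unfolding S_def by (rule integrable_continuous_real) (use wc in \<open>simp add: S_def\<close>)
  have vi: "v integrable_on S" unfolding S_def by (rule integrable_continuous_real) (use vc in \<open>simp add: S_def\<close>)
  have le1: "y \<le> 1 + y^2" if "0 \<le> y" for y :: real
  proof -
    have "0 \<le> (y - 1)^2" by simp
    then have "2 * y \<le> 1 + y^2" by (simp add: power2_eq_square algebra_simps)
    then show ?thesis using that by simp
  qed
  have sqm: "g \<in> borel_measurable (lebesgue_on S)"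
    if "(\<lambda>t. g t ^ 2) integrable_on S" "\<And>t. 0 \<le> g t" for g :: "real \<Rightarrow> real"
  proof -
    have "(\<lambda>t. g t ^ 2) \<in> borel_measurable (lebesgue_on S)" by (rule integrable_imp_measurable[OF that(1)])
    from measurable_compose[OF this borel_measurable_sqrt]
    show ?thesis using that(2) by simp
  qed
  have sqi: "g integrable_on S"
    if "(\<lambda>t. g t ^ 2) integrable_on S" "\<And>t. 0 \<le> g t" for g :: "real \<Rightarrow> real"
  proof (rule measurable_bounded_by_integrable_imp_integrable[OF sqm[OF that] _ _ Sleb])
    show "(\<lambda>t. 1 + g t ^ 2) integrable_on S" using that(1) by (intro integrable_add) (auto simp: S_def)
    show "norm (g t) \<le> 1 + g t ^ 2" if "t \<in> S" for t using le1[of "g t"] \<open>\<And>t. 0 \<le> g t\<close> by simp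
  qed
  have ai: "a integrable_on S" by (rule sqi[OF a2i a0])
  have bi: "b integrable_on S" by (rule sqi[OF b2i b0])
  have fi: "f integrable_on S" unfolding f_def[abs_def]
    by (intro integrable_add ai bi integrable_on_mult_right wi vi)
  have fm: "f \<in> borel_measurable (lebesgue_on S)" by (rule integrable_imp_measurable[OF fi])
  have bigi: "(\<lambda>t. 4 * (a t ^ 2 + b t ^ 2 + C2^2 * w t ^ 2 + C3^2 * v t ^ 2)) integrable_on S"
    by (intro integrable_on_mult_right integrable_add a2i b2i w2i v2i)
  have fsq: "f t ^ 2 \<le> 4 * (a t ^ 2 + b t ^ 2 + C2^2 * w t ^ 2 + C3^2 * v t ^ 2)" for t
    using sq4[of "a t" "b t" "C2 * w t" "C3 * v t"] by (simp add: f_def power_mult_distrib)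
  have f2i: "(\<lambda>t. f t ^ 2) integrable_on S"
  proof (rule measurable_bounded_by_integrable_imp_integrable[OF _ bigi _ Sleb])
    show "(\<lambda>t. f t ^ 2) \<in> borel_measurable (lebesgue_on S)" using fm by measurable
    show "norm (f t ^ 2) \<le> 4 * (a t ^ 2 + b t ^ 2 + C2^2 * w t ^ 2 + C3^2 * v t ^ 2)" if "t \<in> S" for t
      using fsq[of t] by simp
  qed
  have efi: "(\<lambda>s. exp (- C1 * s) * f s) integrable_on S"
  proof (rule measurable_bounded_by_integrable_imp_integrable[OF _ _ _ Sleb])
    have "(\<lambda>s. exp (- C1 * s)) \<in> borel_measurable (lebesgue_on S)"
      by (rule continuous_imp_measurable_on_sets_lebesgue[OF _ Sleb]) (intro continuous_intros)
    then show "(\<lambda>s. exp (- C1 * s) * f s) \<in> borel_measurable (lebesgue_on S)"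
      using fm by (rule borel_measurable_times)
    show "(\<lambda>s. exp (\<bar>C1\<bar> * T) * f s) integrable_on S" by (intro integrable_on_mult_right fi)
    show "norm (exp (- C1 * s) * f s) \<le> exp (\<bar>C1\<bar> * T) * f s" if "s \<in> S" for s
    proof -
      have "- C1 * s \<le> \<bar>C1\<bar> * s" using that by (intro mult_right_mono) (auto simp: S_def)
      also have "\<dots> \<le> \<bar>C1\<bar> * T" using that by (intro mult_left_mono) (auto simp: S_def)
      finally have "exp (- C1 * s) \<le> exp (\<bar>C1\<bar> * T)" by simp
      then show ?thesis using f0[of s] by (simp add: abs_mult mult_right_mono)
    qed
  qed

  have derT: "(er has_vector_derivative er' s) (at s within S)" if "s \<in> S" for s
    unfolding er_def[abs_def] er'_def PP_def
    by (intro has_vector_derivative_diff vd_matrix) (use x_deriv xr_deriv that in \<open>auto simp: S_def\<close>)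
  have er0: "er 0 = 0" by (simp add: er_def x_init xr_init)
  have ineq: "er s \<bullet> er' s \<le> C1 * norm (er s)^2 + norm (er s) * f s" for s
    unfolding er_def er'_def C1_def f_def a_def b_def w_def v_def C2_def C3_def Dr_def
    by (rule key_ineq[OF Phi_orth hg hJ hP Lg0 LJ0 Mi0])

  have kkT: "integral {0..T} (\<lambda>\<tau>. exp (2 * C1 * (T - \<tau>))) = kk T"
    unfolding kk_def by (rule integral_unique[OF exp_int[OF T0]])
  have F_T: "integral S (\<lambda>s. f s ^ 2) \<le> 4 * (A + B' + C2^2 * W + C3^2 * V)"
  proof -
    have "integral S (\<lambda>s. f s ^ 2) \<le> integral S (\<lambda>t. 4 * (a t ^ 2 + b t ^ 2 + C2^2 * w t ^ 2 + C3^2 * v t ^ 2))"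
      by (rule integral_le[OF f2i bigi fsq])
    also have "\<dots> = 4 * (A + B' + C2^2 * W + C3^2 * V)"
      unfolding A_def B'_def W_def V_def S_def[symmetric]
      using a2i b2i w2i v2i
      by (simp add: integral_add integrable_add integral_mult_right integrable_on_mult_right)
    finally show ?thesis .
  qed
  have ptw: "norm (er t)^2 \<le> \<alpha> * (A + B' + C2^2 * W + C3^2 * V)" if t: "t \<in> S" for t
  proof -
    have t0: "0 \<le> t" and tT: "t \<le> T" using t by (auto simp: S_def)
    have sub: "{0..t} \<subseteq> S" using tT by (auto simp: S_def)
    have efit: "(\<lambda>s. exp (- C1 * s) * f s) integrable_on {0..t}"
      using integrable_on_subinterval[OF efi sub] .
    have gr: "exp (- C1 * t) * norm (er t) \<le> integral {0..t} (\<lambda>s. exp (- C1 * s) * f s)"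
    proof (rule gronwall_aux[OF t0 _ er0 ineq f0 efit])
      fix s assume s: "s \<in> {0..t}"
      then have "s \<in> S" using sub by blast
      then show "(er has_vector_derivative er' s) (at s within {0..t})"
        using derT[of s] sub by (meson has_vector_derivative_within_subset)
    qed
    have eeq: "exp (C1 * t) * (exp (- C1 * s) * f s) = exp (C1 * (t - s)) * f s" for s
    proof -
      have "exp (C1 * t) * exp (- C1 * s) = exp (C1 * (t - s))"
        by (simp add: exp_add[symmetric] algebra_simps)
      then show ?thesis by (simp add: mult.assoc[symmetric])
    qed
    have gfi: "(\<lambda>s. exp (C1 * (t - s)) * f s) integrable_on {0..t}"
      using integrable_on_mult_right[OF efit, of "exp (C1 * t)"] unfolding eeq .
    have N: "norm (er t) \<le> integral {0..t} (\<lambda>s. exp (C1 * (t - s)) * f s)"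
    proof -
      have e1: "exp (C1 * t) * exp (- C1 * t) = 1" by (simp add: exp_minus)
      have "norm (er t) = (exp (C1 * t) * exp (- C1 * t)) * norm (er t)" unfolding e1 by simp
      also have "\<dots> = exp (C1 * t) * (exp (- C1 * t) * norm (er t))" by (rule mult.assoc)
      finally have "norm (er t) = exp (C1 * t) * (exp (- C1 * t) * norm (er t))" .
      also have "\<dots> \<le> exp (C1 * t) * integral {0..t} (\<lambda>s. exp (- C1 * s) * f s)"
        by (intro mult_left_mono gr) auto
      also have "\<dots> = integral {0..t} (\<lambda>s. exp (C1 * (t - s)) * f s)"
        by (simp only: integral_mult_right[symmetric] eeq)
      finally show ?thesis .
    qed
    define Ft where "Ft = integral {0..t} (\<lambda>s. f s ^ 2)"
    have f2it: "(\<lambda>s. f s ^ 2) integrable_on {0..t}" using integrable_on_subinterval[OF f2i sub] .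
    have ei: "((\<lambda>s. exp (2 * C1 * (t - s))) has_integral kk t) {0..t}"
      unfolding kk_def by (rule exp_int[OF t0])
    have kk0: "0 \<le> kk t" by (rule has_integral_nonneg[OF ei]) simp
    have Ft0: "0 \<le> Ft" unfolding Ft_def by (rule integral_nonneg[OF f2it]) simp
    have Y: "norm (er t) \<le> (l * kk t + Ft / l) / 2" if l: "l > 0" for l
    proof -
      have "integral {0..t} (\<lambda>s. exp (C1 * (t - s)) * f s)
          \<le> integral {0..t} (\<lambda>s. l / 2 * exp (2 * C1 * (t - s)) + 1 / (2 * l) * f s ^ 2)"
      proof (rule integral_le[OF gfi])
        show "(\<lambda>s. l / 2 * exp (2 * C1 * (t - s)) + 1 / (2 * l) * f s ^ 2) integrable_on {0..t}"
          using ei f2it by (intro integrable_add integrable_on_mult_right) auto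
        fix s
        have sq: "exp (C1 * (t - s))^2 = exp (2 * C1 * (t - s))"
          using exp_of_nat_mult[of 2 "C1 * (t - s)"] by (simp add: mult.assoc)
        show "exp (C1 * (t - s)) * f s \<le> l / 2 * exp (2 * C1 * (t - s)) + 1 / (2 * l) * f s ^ 2"
          using young_pt[OF l, of "exp (C1 * (t - s))" "f s"] unfolding sq by (simp add: field_simps)
      qed
      also have "\<dots> = integral {0..t} (\<lambda>s. l / 2 * exp (2 * C1 * (t - s))) + integral {0..t} (\<lambda>s. 1 / (2 * l) * f s ^ 2)"
        by (rule integral_add; rule integrable_on_mult_right) (use has_integral_integrable[OF ei] f2it in auto)
      also have "\<dots> = l / 2 * kk t + 1 / (2 * l) * Ft"
        unfolding integral_mult_right integral_unique[OF ei] Ft_def ..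
      also have "\<dots> = (l * kk t + Ft / l) / 2" by (simp add: field_simps)
      finally show ?thesis using N by simp
    qed
    have "norm (er t)^2 \<le> kk t * Ft" by (rule young_sq[OF _ kk0 Ft0 Y]) simp_all
    also have "\<dots> \<le> kk T * integral S (\<lambda>s. f s ^ 2)"
    proof (rule mult_mono)
      show "kk t \<le> kk T" unfolding kk_def by (rule exp_int_mono[OF t0 tT])
      show "Ft \<le> integral S (\<lambda>s. f s ^ 2)" unfolding Ft_def
        by (rule integral_subset_le[OF sub f2it f2i]) simp
      show "0 \<le> kk T" using kk0 \<open>kk t \<le> kk T\<close> by linarith
    qed (rule Ft0)
    also have "\<dots> \<le> kk T * (4 * (A + B' + C2^2 * W + C3^2 * V))"
      using kk0 exp_int_mono[OF t0 tT, of C1] F_T by (intro mult_left_mono) (auto simp: kk_def)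
    also have "\<dots> = \<alpha> * (A + B' + C2^2 * W + C3^2 * V)" by (simp add: \<alpha>_def kkT)
    finally show ?thesis .
  qed

  have pyth: "norm (x t - Phi *v xr t)^2 = w t ^ 2 + norm (er t)^2" for t
  proof -
    have eq: "x t - Phi *v xr t = (x t - Phi *v (transpose Phi *v x t)) + Phi *v er t"
      by (simp add: er_def matrix_vector_mult_diff_distrib)
    have orth: "orthogonal (x t - Phi *v (transpose Phi *v x t)) (Phi *v er t)"
      unfolding orthogonal_def
      by (simp add: inner_commute[of _ "Phi *v er t"] inner_transpose matrix_vector_mult_diff_distrib
          matrix_vector_mul_assoc Phi_orth)
    have "norm (x t - Phi *v xr t)^2 = norm (x t - Phi *v (transpose Phi *v x t))^2 + norm (Phi *v er t)^2"
      unfolding eq by (rule norm_add_Pythagorean[OF orth])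
    then show ?thesis unfolding w_def orth_norm[OF Phi_orth] .
  qed
  have er2i: "(\<lambda>t. norm (er t)^2) integrable_on S" unfolding S_def
    by (rule integrable_continuous_real) (use erc in \<open>auto intro!: continuous_intros simp: S_def\<close>)
  define \<Sigma> where "\<Sigma> = A + B' + C2^2 * W + C3^2 * V"
  have "integral S (\<lambda>t. norm (x t - Phi *v xr t)^2) = W + integral S (\<lambda>t. norm (er t)^2)"
    unfolding pyth W_def S_def[symmetric] using w2i er2i by (simp add: integral_add)
  also have "integral S (\<lambda>t. norm (er t)^2) \<le> integral S (\<lambda>t. \<alpha> * \<Sigma>)"
    by (rule integral_le[OF er2i]) (use ptw in \<open>auto simp: \<Sigma>_def S_def\<close>)
  also have "integral S (\<lambda>t. \<alpha> * \<Sigma>) = T * \<alpha> * \<Sigma>" using T0 by (simp add: S_def)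
  finally have fin0: "integral S (\<lambda>t. norm (x t - Phi *v xr t)^2) \<le> W + T * \<alpha> * \<Sigma>" by simp
  have A0: "0 \<le> A" unfolding A_def by (rule integral_nonneg) (use a2i in \<open>auto simp: S_def\<close>)
  have B0: "0 \<le> B'" unfolding B'_def by (rule integral_nonneg) (use b2i in \<open>auto simp: S_def\<close>)
  have W0: "0 \<le> W" unfolding W_def by (rule integral_nonneg) (use w2i in \<open>auto simp: S_def\<close>)
  have V0: "0 \<le> V" unfolding V_def by (rule integral_nonneg) (use v2i in \<open>auto simp: S_def\<close>)
  have CTeq: "CT = max (1 + C2^2 * T * \<alpha>) (max (C3^2 * T * \<alpha>) (T * \<alpha>))" by (simp add: CT_def)
  have "W + T * \<alpha> * \<Sigma> = (1 + C2^2 * T * \<alpha>) * W + (T * \<alpha>) * A + (T * \<alpha>) * B' + (C3^2 * T * \<alpha>) * V"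
    by (simp add: \<Sigma>_def algebra_simps)
  also have "\<dots> \<le> CT * W + CT * A + CT * B' + CT * V"
    unfolding CTeq by (intro add_mono mult_right_mono A0 B0 W0 V0) auto
  finally have "integral S (\<lambda>t. norm (x t - Phi *v xr t)^2) \<le> CT * (W + A + B' + V)"
    using fin0 by (simp add: algebra_simps)
  then show ?thesis
    unfolding Let_def CT_def \<alpha>_def C1_def C2_def C3_def Dr_def PP_def Lg_def LJ_def Mi_def
      W_def A_def B'_def V_def w_def a_def b_def v_def S_def .
qed

end
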